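(* Let $\mathbf{F}:\ell^n\times\ell^m\to\ell^n$ be a strictly causal plant operator with components $F_0\equiv0$, $F_t(x_{t:0},u_{t:0})=f_t(x_{t-1:0},u_{t-1:0})$, and let $\mathbf{\Psi}=(\mathbf{\Psi}^x,\mathbf{\Psi}^u):\ell^n\to\ell^n\times\ell^m$ be causal with $\mathbf{\Psi}^x-\mathbf{I}$ strictly causal ($\mathbf{\Psi}$ is not assumed to be a closed-loop map). Fix $p$. Assume that $\mathbf{\Psi}$ and $\mathbf{F}$ are incrementally finite gain $\ell_p$-stable, and that the residual operator $$\mathbf{\Delta}[\mathbf{F},\mathbf{\Psi}]:=\mathbf{F}(\mathbf{\Psi})+\mathbf{I}-\mathbf{\Psi}^x:\ell^n\to\ell^n$$ is $(\gamma,\beta)$-incrementally finite gain $\ell_p$-stable with $\gamma<1$. Then, for every $\bm{\delta}^*\in\ell^n_p\times\ell^m_p\times\ell^n_p$, the perturbed closed-loop map $\mathbf{\Phi}_{S_1'}[\mathbf{F},\mathbf{\Psi}]$ is finite gain $\ell_p$-stable at $\bm{\delta}^*$.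
   Context: $\ell^n$ is the space of sequences in $\mathbb{R}^n$ indexed by $t=0,1,2,\dots$; $|\cdot|$ is a fixed norm on each $\mathbb{R}^k$; $\|\mathbf{x}\|_p=(\sum_{k\ge0}|x_k|^p)^{1/p}$ for $p<\infty$, $\|\mathbf{x}\|_\infty=\sup_k|x_k|$, and $\ell^n_p=\{\mathbf{x}\in\ell^n:\|\mathbf{x}\|_p<\infty\}$. On product spaces the norm is the sum, e.g. $\|(\mathbf{w},\mathbf{d},\mathbf{v})\|_p=\|\mathbf{w}\|_p+\|\mathbf{d}\|_p+\|\mathbf{v}\|_p$. Causal / strictly causal operators: $(\mathbf{A}(\mathbf{x}))_t=A_t(x_{t:0})$ with component functions $A_t$, strictly causal if $A_t$ does not depend on its first argument $x_t$; sums are pointwise, products are compositions, $\mathbf{F}(\mathbf{\Psi})$ means $\mathbf{w}\mapsto\mathbf{F}(\mathbf{\Psi}^x(\mathbf{w}),\mathbf{\Psi}^u(\mathbf{w}))$. An operator $\mathbf{A}$ between such spaces is: finite gain (f.g.) $\ell_p$-stable at $\mathbf{a}_0\in\ell_p$ if there are $\gamma,\beta\ge0$ with $\|\mathbf{A}(\mathbf{a})-\mathbf{A}(\mathbf{a}_0)\|_p\le\gamma\|\mathbf{a}-\mathbf{a}_0\|_p+\beta$ for all $\mathbf{a}\in\ell_p$; $(\gamma,\beta)$-incrementally finite gain (i.f.g.) $\ell_p$-stable if $\|\mathbf{A}(\mathbf{a})-\mathbf{A}(\mathbf{a}')\|_p\le\gamma\|\mathbf{a}-\mathbf{a}'\|_p+\beta$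 for all $\mathbf{a},\mathbf{a}'\in\ell_p$ (i.f.g. if this holds for some $\gamma,\beta\ge0$). The perturbed closed loop $S_1'$: given perturbations $\bm{\delta}=(\mathbf{w},\mathbf{d},\mathbf{v})\in\ell^n\times\ell^m\times\ell^n$, define recursively $x_0=w_0$, $x_t=f_t(x_{t-1:0},u_{t-1:0})+w_t$ ($t\ge1$), $\hat w_t=x_t+v_t-\Psi^x_t(0,\hat w_{t-1:0})$, $u_t=\Psi^u_t(\hat w_{t:0})+d_t$ (the controller with internal state $\hat{\mathbf{w}}$ is the "system level controller" parametrized by $\mathbf{\Psi}$). The map $\mathbf{\Phi}_{S_1'}[\mathbf{F},\mathbf{\Psi}]:\ell^n\times\ell^m\times\ell^n\to\ell^n\times\ell^m\times\ell^n$ is $\bm{\delta}\mapsto(\mathbf{x},\mathbf{u},\hat{\mathbf{w}})$. *)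

theory Defs
  imports "HOL-Analysis.Analysis" "HOL-Library.Product_Plus" "HOL-Library.Function_Algebras"
begin

text \<open>A norm on a real vector space, given as an explicit function (the paper fixes an
arbitrary norm on each R^k).\<close>
definition is_norm :: "('a::real_vector \<Rightarrow> real) \<Rightarrow> bool" where
  "is_norm N \<longleftrightarrow> (\<forall>x. 0 \<le> N x) \<and> (\<forall>x. N x = 0 \<longleftrightarrow> x = 0) \<and>
     (\<forall>c x. N (scaleR c x) = \<bar>c\<bar> * N x) \<and> (\<forall>x y. N (x + y) \<le> N x + N y)"

text \<open>The l_p norm of a sequence (value infinity if the sequence is not in l_p);
p is an extended real, p = infinity giving the sup norm.\<close>
definition lp_norm :: "('a \<Rightarrow> real) \<Rightarrow> ereal \<Rightarrow> (nat \<Rightarrow> 'a) \<Rightarrow> ereal" where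
  "lp_norm N p x =
     (if p = \<infinity> then (SUP k. ereal (N (x k)))
      else if summable (\<lambda>k. N (x k) powr real_of_ereal p)
        then ereal ((\<Sum>k. N (x k) powr real_of_ereal p) powr (1 / real_of_ereal p))
        else \<infinity>)"

definition pair_norm :: "('a \<Rightarrow> ereal) \<Rightarrow> ('b \<Rightarrow> ereal) \<Rightarrow> 'a \<times> 'b \<Rightarrow> ereal" where
  "pair_norm N1 N2 = (\<lambda>(a, b). N1 a + N2 b)"

definition causal :: "((nat \<Rightarrow> 'a) \<Rightarrow> (nat \<Rightarrow> 'b)) \<Rightarrow> bool" where
  "causal A \<longleftrightarrow> (\<forall>x y t. (\<forall>s\<le>t. x s = y s) \<longrightarrow> A x t = A y t)"

definition strictly_causal :: "((nat \<Rightarrow> 'a) \<Rightarrow> (nat \<Rightarrow> 'b)) \<Rightarrow> bool" where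
  "strictly_causal A \<longleftrightarrow> (\<forall>x y t. (\<forall>s<t. x s = y s) \<longrightarrow> A x t = A y t)"

definition strictly_causal2 :: "((nat \<Rightarrow> 'a) \<times> (nat \<Rightarrow> 'b) \<Rightarrow> (nat \<Rightarrow> 'c)) \<Rightarrow> bool" where
  "strictly_causal2 F \<longleftrightarrow>
     (\<forall>x u y v t. (\<forall>s<t. x s = y s \<and> u s = v s) \<longrightarrow> F (x, u) t = F (y, v) t)"

text \<open>Stability notions; NA, NB are the l_p norms of domain and codomain
(membership in l_p means finite norm).\<close>
definition fg_stable_at :: "('a::minus \<Rightarrow> ereal) \<Rightarrow> ('b::minus \<Rightarrow> ereal) \<Rightarrow> ('a \<Rightarrow> 'b) \<Rightarrow> 'a \<Rightarrow> bool" where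
  "fg_stable_at NA NB A a0 \<longleftrightarrow>
     (\<exists>\<gamma> \<beta>. 0 \<le> \<gamma> \<and> 0 \<le> \<beta> \<and>
        (\<forall>a. NA a < \<infinity> \<longrightarrow> NB (A a - A a0) \<le> ereal \<gamma> * NA (a - a0) + ereal \<beta>))"

definition ifg_stable_with :: "('a::minus \<Rightarrow> ereal) \<Rightarrow> ('b::minus \<Rightarrow> ereal) \<Rightarrow> ('a \<Rightarrow> 'b) \<Rightarrow> real \<Rightarrow> real \<Rightarrow> bool" where
  "ifg_stable_with NA NB A \<gamma> \<beta> \<longleftrightarrow> 0 \<le> \<gamma> \<and> 0 \<le> \<beta> \<and>
     (\<forall>a a'. NA a < \<infinity> \<longrightarrow> NA a' < \<infinity> \<longrightarrow> NB (A a - A a') \<le> ereal \<gamma> * NA (a - a') + ereal \<beta>)"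

definition ifg_stable :: "('a::minus \<Rightarrow> ereal) \<Rightarrow> ('b::minus \<Rightarrow> ereal) \<Rightarrow> ('a \<Rightarrow> 'b) \<Rightarrow> bool" where
  "ifg_stable NA NB A \<longleftrightarrow> (\<exists>\<gamma> \<beta>. ifg_stable_with NA NB A \<gamma> \<beta>)"

text \<open>The perturbed closed loop S1': (x,u,what) solves the recursion driven by (w,d,v).\<close>
definition closed_loop_S1 ::
  "((nat \<Rightarrow> 'x::ab_group_add) \<times> (nat \<Rightarrow> 'u::ab_group_add) \<Rightarrow> (nat \<Rightarrow> 'x)) \<Rightarrow>
   ((nat \<Rightarrow> 'x) \<Rightarrow> (nat \<Rightarrow> 'x)) \<Rightarrow> ((nat \<Rightarrow> 'x) \<Rightarrow> (nat \<Rightarrow> 'u)) \<Rightarrow>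
   (nat \<Rightarrow> 'x) \<times> (nat \<Rightarrow> 'u) \<times> (nat \<Rightarrow> 'x) \<Rightarrow>
   (nat \<Rightarrow> 'x) \<times> (nat \<Rightarrow> 'u) \<times> (nat \<Rightarrow> 'x) \<Rightarrow> bool" where
  "closed_loop_S1 F Psix Psiu \<delta> y \<longleftrightarrow>
     (case \<delta> of (w, d, v) \<Rightarrow> case y of (x, u, wh) \<Rightarrow>
        x 0 = w 0 \<and> (\<forall>t>0. x t = F (x, u) t + w t) \<and>
        (\<forall>t. wh t = x t + v t - Psix (wh(t := 0)) t) \<and>
        (\<forall>t. u t = Psiu wh t + d t))"

text \<open>The map delta |-> (x,u,what) (the recursion determines the solution uniquely).\<close>
definition Phi_S1 where
  "Phi_S1 F Psix Psiu \<delta> = (THE y. closed_loop_S1 F Psix Psiu \<delta> y)"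

end

theory Submission
  imports Defs
begin


lemma isn:
  assumes "is_norm N"
  shows "N 0 = 0" "N x \<ge> 0" "N (-x) = N x" "N (x + y) \<le> N x + N y"
proof -
  show "N 0 = 0" using assms unfolding is_norm_def by auto
  show "N x \<ge> 0" using assms unfolding is_norm_def by auto
  have "N (scaleR (-1) x) = \<bar>-1\<bar> * N x" using assms unfolding is_norm_def by blast
  then show "N (-x) = N x" by simp
  show "N (x + y) \<le> N x + N y" using assms unfolding is_norm_def by blast
qed

definition trunc :: "nat \<Rightarrow> (nat \<Rightarrow> 'a::zero) \<Rightarrow> nat \<Rightarrow> 'a" where
  "trunc T a = (\<lambda>s. if s \<le> T then a s else 0)"

lemma p_cases:
  assumes "1 \<le> p"
  obtains "p = \<infinity>" | q where "p = ereal q" "1 \<le> q" "real_of_ereal p = q"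
  using assms by (cases p) auto

lemma lp_nonneg:
  assumes "is_norm N" "1 \<le> p"
  shows "0 \<le> lp_norm N p a"
proof (cases rule: p_cases[OF assms(2)])
  case 1
  have "ereal (N (a 0)) \<le> (SUP k. ereal (N (a k)))" by (rule SUP_upper) auto
  moreover have "0 \<le> ereal (N (a 0))" using isn[OF assms(1)] by simp
  ultimately show ?thesis using 1 unfolding lp_norm_def by (simp, meson order_trans)
next
  case (2 q)
  then show ?thesis unfolding lp_norm_def by auto
qed

lemma lp_mono:
  assumes "is_norm N" "1 \<le> p" "\<And>k. N (a k) \<le> N (b k)"
  shows "lp_norm N p a \<le> lp_norm N p b"
proof (cases rule: p_cases[OF assms(2)])
  case 1
  then show ?thesis unfolding lp_norm_def using assms(3)
    by (auto intro!: SUP_mono) (meson ereal_less_eq(3) rangeI)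
next
  case (2 q)
  show ?thesis
  proof (cases "summable (\<lambda>k. N (b k) powr q)")
    case False
    then show ?thesis using 2 unfolding lp_norm_def by auto
  next
    case True
    have le: "N (a k) powr q \<le> N (b k) powr q" for k
      using assms(3) isn[OF assms(1)] 2 by (intro powr_mono2) auto
    have sa: "summable (\<lambda>k. N (a k) powr q)"
      by (rule summable_comparison_test'[OF True]) (use le in auto)
    have "(\<Sum>k. N (a k) powr q) \<le> (\<Sum>k. N (b k) powr q)"
      by (rule suminf_le[OF le sa True])
    then have "(\<Sum>k. N (a k) powr q) powr (1/q) \<le> (\<Sum>k. N (b k) powr q) powr (1/q)"
      using 2 by (intro powr_mono2) (auto intro!: suminf_nonneg sa)
    then show ?thesis using 2 sa True unfolding lp_norm_def by auto
  qed
qed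

lemma lp_cong:
  assumes "is_norm N" "1 \<le> p" "\<And>k. N (a k) = N (b k)"
  shows "lp_norm N p a = lp_norm N p b"
  using lp_mono[OF assms(1,2), of a b] lp_mono[OF assms(1,2), of b a] assms(3) by auto

lemma lp_uminus:
  assumes "is_norm N" "1 \<le> p"
  shows "lp_norm N p (- a) = lp_norm N p a"
  by (rule lp_cong[OF assms]) (simp add: isn[OF assms(1)])

lemma lp_minus_commute:
  assumes "is_norm N" "1 \<le> p"
  shows "lp_norm N p (a - b) = lp_norm N p (b - a)"
proof -
  have "a - b = - (b - a)" by simp
  then show ?thesis using lp_uminus[OF assms, of "b - a"] by simp
qed

lemma lp_trunc_le:
  assumes "is_norm N" "1 \<le> p"
  shows "lp_norm N p (trunc T a) \<le> lp_norm N p a"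
  by (rule lp_mono[OF assms]) (auto simp: trunc_def isn[OF assms(1)])

lemma lp_trunc_fin:
  assumes "is_norm N" "1 \<le> p"
  shows "lp_norm N p (trunc T a) < \<infinity>"
proof (cases rule: p_cases[OF assms(2)])
  case 1
  have "(SUP k. ereal (N (trunc T a k))) \<le> ereal (\<Sum>s\<le>T. N (a s))"
  proof (rule SUP_least)
    fix k
    show "ereal (N (trunc T a k)) \<le> ereal (\<Sum>s\<le>T. N (a s))"
    proof (cases "k \<le> T")
      case True
      have "N (a k) \<le> (\<Sum>s\<le>T. N (a s))"
        by (rule member_le_sum) (use True isn[OF assms(1)] in auto)
      then show ?thesis using True by (simp add: trunc_def)
    next
      case False
      then show ?thesis by (simp add: trunc_def isn[OF assms(1)] sum_nonneg)
    qed
  qed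
  then show ?thesis using 1 unfolding lp_norm_def by (auto simp: order_le_less_trans)
next
  case (2 q)
  have "summable (\<lambda>k. N (trunc T a k) powr q)"
    by (rule summable_finite[of "{..T}"]) (auto simp: trunc_def isn[OF assms(1)])
  then show ?thesis using 2 unfolding lp_norm_def by auto
qed

lemma lp_sup:
  assumes "is_norm N" "1 \<le> p" "\<And>T. lp_norm N p (trunc T a) \<le> ereal c"
  shows "lp_norm N p a \<le> ereal c"
proof (cases rule: p_cases[OF assms(2)])
  case 1
  show ?thesis unfolding lp_norm_def using 1
  proof (simp, intro SUP_least)
    fix k
    have "lp_norm N p (trunc k a) \<ge> ereal (N (a k))"
      using 1 unfolding lp_norm_def by (auto intro!: SUP_upper2[of k] simp: trunc_def)
    then show "ereal (N (a k)) \<le> ereal c" using assms(3)[of k] by (meson order_trans)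
  qed
next
  case (2 q)
  have c0: "0 \<le> c" using lp_nonneg[OF assms(1,2), of "trunc 0 a"] assms(3)[of 0]
    by (metis ereal_less_eq(5) order_trans)
  have st: "summable (\<lambda>k. N (trunc T a k) powr q)" for T
    by (rule summable_finite[of "{..T}"]) (auto simp: trunc_def isn[OF assms(1)])
  have sumt: "(\<Sum>k. N (trunc T a k) powr q) = (\<Sum>k\<le>T. N (a k) powr q)" for T
    by (subst suminf_finite[of "{..T}"]) (auto simp: trunc_def isn[OF assms(1)])
  have bnd: "(\<Sum>k\<le>T. N (a k) powr q) \<le> c powr q" for T
  proof -
    have "ereal ((\<Sum>k\<le>T. N (a k) powr q) powr (1/q)) \<le> ereal c"
      using assms(3)[of T] 2 st[of T] sumt[of T] unfolding lp_norm_def by auto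
    then have h: "(\<Sum>k\<le>T. N (a k) powr q) powr (1/q) \<le> c" by simp
    have nn: "0 \<le> (\<Sum>k\<le>T. N (a k) powr q)" by (auto intro: sum_nonneg)
    have "(\<Sum>k\<le>T. N (a k) powr q) = ((\<Sum>k\<le>T. N (a k) powr q) powr (1/q)) powr q"
      using 2 nn by (simp add: powr_powr)
    also have "\<dots> \<le> c powr q" using h 2 by (intro powr_mono2) auto
    finally show ?thesis .
  qed
  have bnd': "(\<Sum>k<n. N (a k) powr q) \<le> c powr q" for n
  proof (cases n)
    case 0 then show ?thesis by simp
  next
    case (Suc m)
    then have "{..<n} = {..m}" by auto
    then show ?thesis using bnd[of m] by simp
  qed
  have sa: "summable (\<lambda>k. N (a k) powr q)"
    by (rule summableI_nonneg_bounded[OF _ bnd']) auto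
  have "(\<Sum>k. N (a k) powr q) \<le> c powr q" by (rule suminf_le_const[OF sa bnd'])
  then have "(\<Sum>k. N (a k) powr q) powr (1/q) \<le> (c powr q) powr (1/q)"
    using 2 by (intro powr_mono2) (auto intro!: suminf_nonneg sa)
  also have "\<dots> = c" using 2 c0 by (simp add: powr_powr)
  finally show ?thesis using 2 sa unfolding lp_norm_def by auto
qed



lemma pw_ineq:
  fixes x y l q :: real
  assumes "0 \<le> x" "0 \<le> y" "0 < l" "l < 1" "1 \<le> q"
  shows "(x + y) powr q \<le> l powr (1 - q) * x powr q + (1 - l) powr (1 - q) * y powr q"
proof -
  have g1: "1 \<le> l powr (1 - q)" "1 \<le> (1 - l) powr (1 - q)"
    using assms powr_mono'[of "1-q" 0 l] powr_mono'[of "1-q" 0 "1-l"] by auto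
  show ?thesis
  proof (cases "x = 0 \<or> y = 0")
    case True
    then show ?thesis
    proof
      assume "x = 0"
      then show ?thesis using g1 assms
        by (simp add: mult_le_cancel_right1)
    next
      assume "y = 0"
      then show ?thesis using g1 assms
        by (simp add: mult_le_cancel_right1)
    qed
  next
    case False
    then have xp: "0 < x" "0 < y" using assms by auto
    have cv: "convex_on {0<..} (\<lambda>x::real. x powr q)" by (rule powr_convex[OF assms(5)])
    have "(l * (x / l) + (1 - l) * (y / (1 - l))) powr q
          \<le> l * (x / l) powr q + (1 - l) * (y / (1 - l)) powr q"
      using convex_onD[OF cv, of "1 - l" "x / l" "y / (1 - l)"] assms xp by auto
    moreover have "l * (x / l) = x" "(1 - l) * (y / (1 - l)) = y" using assms by auto
    moreover have "l * (x / l) powr q = l powr (1 - q) * x powr q"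
      using assms xp by (simp add: powr_divide powr_diff)
    moreover have "(1 - l) * (y / (1 - l)) powr q = (1 - l) powr (1 - q) * y powr q"
      using assms xp by (simp add: powr_divide powr_diff)
    ultimately show ?thesis by simp
  qed
qed



lemma zero_sum_case:
  assumes "is_norm N" "1 \<le> q" "summable (\<lambda>k. N (a k) powr q)"
    "(\<Sum>k. N (a k) powr q) powr (1/q) = 0"
  shows "a k = 0"
proof -
  have "(\<Sum>k. N (a k) powr q) = 0" using assms(4) by simp
  then have "\<forall>k. N (a k) powr q = 0"
    using suminf_eq_zero_iff[OF assms(3)] by auto
  then have "N (a k) = 0" by simp
  then show ?thesis using assms(1) unfolding is_norm_def by auto
qed

lemma alg:
  fixes \<alpha> \<beta> q :: real
  assumes "0 < \<alpha>" "0 < \<beta>" "1 \<le> q"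
  shows "(\<alpha> / (\<alpha> + \<beta>)) powr (1 - q) * \<alpha> powr q = \<alpha> * (\<alpha> + \<beta>) powr (q - 1)"
proof -
  have "(\<alpha> / (\<alpha> + \<beta>)) powr (1 - q) * \<alpha> powr q
       = (\<alpha> powr (1 - q) * \<alpha> powr q) / (\<alpha> + \<beta>) powr (1 - q)"
    using assms by (simp add: powr_divide)
  also have "\<alpha> powr (1 - q) * \<alpha> powr q = \<alpha>" using assms by (simp add: powr_add[symmetric])
  also have "\<alpha> / (\<alpha> + \<beta>) powr (1 - q) = \<alpha> * (\<alpha> + \<beta>) powr (q - 1)"
    using assms by (simp add: powr_minus_divide[symmetric] divide_inverse powr_minus[symmetric])
  finally show ?thesis .
qed

lemma lp_triangle:
  assumes "is_norm N" "1 \<le> p"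
  shows "lp_norm N p (a + b) \<le> lp_norm N p a + lp_norm N p b"
proof (cases rule: p_cases[OF assms(2)])
  case 1
  have "(SUP k. ereal (N (a k + b k))) \<le> (SUP k. ereal (N (a k))) + (SUP k. ereal (N (b k)))"
  proof (rule SUP_least)
    fix k
    have "ereal (N (a k + b k)) \<le> ereal (N (a k)) + ereal (N (b k))"
      using isn(4)[OF assms(1)] by simp
    also have "\<dots> \<le> (SUP k. ereal (N (a k))) + (SUP k. ereal (N (b k)))"
      by (intro add_mono SUP_upper) auto
    finally show "ereal (N (a k + b k)) \<le> \<dots>" .
  qed
  then show ?thesis using 1 unfolding lp_norm_def by simp
next
  case (2 q)
  have na: "0 \<le> lp_norm N p a" "0 \<le> lp_norm N p b" using lp_nonneg[OF assms] by auto
  show ?thesis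
  proof (cases "summable (\<lambda>k. N (a k) powr q) \<and> summable (\<lambda>k. N (b k) powr q)")
    case False
    then have "lp_norm N p a = \<infinity> \<or> lp_norm N p b = \<infinity>" using 2 unfolding lp_norm_def by auto
    then show ?thesis using na by auto
  next
    case True
    then have sa: "summable (\<lambda>k. N (a k) powr q)" and sb: "summable (\<lambda>k. N (b k) powr q)" by auto
    define A where "A = (\<Sum>k. N (a k) powr q)"
    define B where "B = (\<Sum>k. N (b k) powr q)"
    define \<alpha> where "\<alpha> = A powr (1/q)"
    define \<beta> where "\<beta> = B powr (1/q)"
    have A0: "0 \<le> A" "0 \<le> B" unfolding A_def B_def using sa sb by (auto intro!: suminf_nonneg)
    have la: "lp_norm N p a = ereal \<alpha>" "lp_norm N p b = ereal \<beta>"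
      using 2 sa sb unfolding lp_norm_def \<alpha>_def \<beta>_def A_def B_def by auto
    show ?thesis
    proof (cases "\<alpha> = 0 \<or> \<beta> = 0")
      case True
      then show ?thesis
      proof
        assume "\<alpha> = 0"
        then have "\<And>k. a k = 0" using zero_sum_case[OF assms(1) _ sa] 2 unfolding \<alpha>_def A_def by auto
        then have "a + b = b" by (auto simp: fun_eq_iff)
        then show ?thesis using la \<open>\<alpha> = 0\<close> by simp
      next
        assume "\<beta> = 0"
        then have "\<And>k. b k = 0" using zero_sum_case[OF assms(1) _ sb] 2 unfolding \<beta>_def B_def by auto
        then have "a + b = a" by (auto simp: fun_eq_iff)
        then show ?thesis using la \<open>\<beta> = 0\<close> by simp
      qed
    next
      case False
      then have ab: "0 < \<alpha>" "0 < \<beta>" unfolding \<alpha>_def \<beta>_def using A0 by auto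
      define l where "l = \<alpha> / (\<alpha> + \<beta>)"
      have l: "0 < l" "l < 1" "1 - l = \<beta> / (\<alpha> + \<beta>)" using ab unfolding l_def by (auto simp: field_simps)
      define g where "g k = l powr (1 - q) * N (a k) powr q + (1 - l) powr (1 - q) * N (b k) powr q" for k
      have pw: "N (a k + b k) powr q \<le> g k" for k
      proof -
        have "N (a k + b k) powr q \<le> (N (a k) + N (b k)) powr q"
          using 2 isn[OF assms(1)] by (intro powr_mono2) auto
        also have "\<dots> \<le> g k" unfolding g_def
          by (rule pw_ineq) (use l 2 isn[OF assms(1)] in auto)
        finally show ?thesis .
      qed
      have sg: "summable g" unfolding g_def by (intro summable_add summable_mult sa sb)
      have sab: "summable (\<lambda>k. N (a k + b k) powr q)"
        by (rule summable_comparison_test'[OF sg]) (use pw in auto)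
      have "(\<Sum>k. N (a k + b k) powr q) \<le> (\<Sum>k. g k)" by (rule suminf_le[OF pw sab sg])
      also have "(\<Sum>k. g k) = l powr (1 - q) * A + (1 - l) powr (1 - q) * B"
        unfolding g_def A_def B_def using sa sb by (simp add: suminf_add[symmetric] suminf_mult)
      also have "A = \<alpha> powr q" unfolding \<alpha>_def using A0 2 by (auto simp: powr_powr)
      also have "B = \<beta> powr q" unfolding \<beta>_def using A0 2 by (auto simp: powr_powr)
      also have "l powr (1 - q) * \<alpha> powr q + (1 - l) powr (1 - q) * \<beta> powr q
          = \<alpha> * (\<alpha> + \<beta>) powr (q - 1) + \<beta> * (\<alpha> + \<beta>) powr (q - 1)"
        unfolding l(3) unfolding l_def using alg[OF ab 2(2)] alg[OF ab(2,1) 2(2)] by (simp add: add.commute)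
      also have "\<dots> = (\<alpha> + \<beta>) powr q" using ab
        by (simp add: distrib_right[symmetric] powr_mult_base)
      finally have "(\<Sum>k. N (a k + b k) powr q) \<le> (\<alpha> + \<beta>) powr q" .
      then have "(\<Sum>k. N (a k + b k) powr q) powr (1/q) \<le> ((\<alpha> + \<beta>) powr q) powr (1/q)"
        using 2 by (intro powr_mono2) (auto intro!: suminf_nonneg sab)
      also have "\<dots> = \<alpha> + \<beta>" using ab 2 by (simp add: powr_powr)
      finally show ?thesis using 2 sab la unfolding lp_norm_def by simp
    qed
  qed
qed



definition cl_step where
  "cl_step F Px Pu \<delta> t y = (case \<delta> of (w, d, v) \<Rightarrow> case y of (x, u, wh) \<Rightarrow>
     (let x' = x(t := (if t = 0 then w 0 else F (x, u) t + w t));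
          wh' = wh(t := x' t + v t - Px (wh(t := 0)) t)
      in (x', u(t := Pu wh' t + d t), wh')))"

fun cl_seq where
  "cl_seq F Px Pu \<delta> 0 = cl_step F Px Pu \<delta> 0 (0, 0, 0)"
| "cl_seq F Px Pu \<delta> (Suc t) = cl_step F Px Pu \<delta> (Suc t) (cl_seq F Px Pu \<delta> t)"

lemma cl_step_other:
  assumes "s \<noteq> t"
  shows "fst (cl_step F Px Pu \<delta> t y) s = fst y s"
    "fst (snd (cl_step F Px Pu \<delta> t y)) s = fst (snd y) s"
    "snd (snd (cl_step F Px Pu \<delta> t y)) s = snd (snd y) s"
  using assms unfolding cl_step_def by (auto split: prod.splits simp: Let_def)

lemma cl_seq_stable:
  "s \<le> t \<Longrightarrow> fst (cl_seq F Px Pu \<delta> t) s = fst (cl_seq F Px Pu \<delta> s) s \<and>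
     fst (snd (cl_seq F Px Pu \<delta> t)) s = fst (snd (cl_seq F Px Pu \<delta> s)) s \<and>
     snd (snd (cl_seq F Px Pu \<delta> t)) s = snd (snd (cl_seq F Px Pu \<delta> s)) s"
proof (induction t)
  case 0 then show ?case by simp
next
  case (Suc t)
  show ?case
  proof (cases "s = Suc t")
    case True then show ?thesis by simp
  next
    case False
    then have "s \<le> t" using Suc.prems by simp
    then show ?thesis using Suc.IH
        cl_step_other(1)[OF False, of F Px Pu \<delta> "cl_seq F Px Pu \<delta> t"]
        cl_step_other(2)[OF False, of F Px Pu \<delta> "cl_seq F Px Pu \<delta> t"]
        cl_step_other(3)[OF False, of F Px Pu \<delta> "cl_seq F Px Pu \<delta> t"] by simp
  qed
qed

lemma causalD: "causal A \<Longrightarrow> (\<And>s. s \<le> t \<Longrightarrow> x s = y s) \<Longrightarrow> A x t = A y t"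
  unfolding causal_def by blast

lemma upd_agree:
  fixes t :: nat
  assumes "\<And>s. s < t \<Longrightarrow> f s = g s"
  shows "s \<le> t \<Longrightarrow> (f(t := c)) s = (g(t := c)) s"
  using assms by (cases "s = t") (auto simp: order_le_neq_trans)

lemma closed_loop_unique:
  assumes sc: "strictly_causal2 F" and cx: "causal Px" and cu: "causal Pu"
    and h1: "closed_loop_S1 F Px Pu \<delta> y1" and h2: "closed_loop_S1 F Px Pu \<delta> y2"
  shows "y1 = y2"
proof -
  obtain w d v where \<delta>: "\<delta> = (w, d, v)" by (cases \<delta>) auto
  obtain x1 u1 wh1 where y1: "y1 = (x1, u1, wh1)" by (cases y1) auto
  obtain x2 u2 wh2 where y2: "y2 = (x2, u2, wh2)" by (cases y2) auto
  note H1 = h1[unfolded closed_loop_S1_def \<delta> y1, simplified]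
  note H2 = h2[unfolded closed_loop_S1_def \<delta> y2, simplified]
  have "x1 t = x2 t \<and> u1 t = u2 t \<and> wh1 t = wh2 t" for t
  proof (induction t rule: less_induct)
    case (less t)
    have xe: "x1 t = x2 t"
    proof (cases "t = 0")
      case True then show ?thesis using H1 H2 by simp
    next
      case False
      have "F (x1, u1) t = F (x2, u2) t"
        using sc less unfolding strictly_causal2_def by blast
      then show ?thesis using H1 H2 False by simp
    qed
    have "Px (wh1(t := 0)) t = Px (wh2(t := 0)) t"
      by (rule causalD[OF cx], rule upd_agree) (use less in auto)
    then have we: "wh1 t = wh2 t" using H1 H2 xe by metis
    have "Pu wh1 t = Pu wh2 t"
    proof (rule causalD[OF cu])
      fix s assume "s \<le> t"
      then show "wh1 s = wh2 s" using less we by (cases "s = t") auto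
    qed
    then have "u1 t = u2 t" using H1 H2 by metis
    then show ?case using xe we by simp
  qed
  then show ?thesis using y1 y2 by (auto simp: fun_eq_iff)
qed

lemma closed_loop_exists:
  assumes sc: "strictly_causal2 F" and cx: "causal Px" and cu: "causal Pu"
  shows "\<exists>y. closed_loop_S1 F Px Pu \<delta> y"
proof -
  obtain w d v where \<delta>: "\<delta> = (w, d, v)" by (cases \<delta>) auto
  let ?S = "cl_seq F Px Pu \<delta>"
  define X where "X s = fst (?S s) s" for s
  define U where "U s = fst (snd (?S s)) s" for s
  define W where "W s = snd (snd (?S s)) s" for s
  define prev where "prev t = (if t = 0 then (0, 0, 0) else ?S (t - 1))" for t
  have Sprev: "?S t = cl_step F Px Pu \<delta> t (prev t)" for t
    unfolding prev_def by (cases t) auto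
  have pagree: "s < t \<Longrightarrow> fst (prev t) s = X s \<and> fst (snd (prev t)) s = U s \<and> snd (snd (prev t)) s = W s" for s t
    unfolding prev_def X_def U_def W_def using cl_seq_stable[of s "t - 1" F Px Pu \<delta>] by auto
  have eqs: "X t = (if t = 0 then w 0 else F (fst (prev t), fst (snd (prev t))) t + w t)
     \<and> W t = X t + v t - Px ((snd (snd (prev t)))(t := 0)) t
     \<and> U t = Pu ((snd (snd (prev t)))(t := X t + v t - Px ((snd (snd (prev t)))(t := 0)) t)) t + d t" for t
    unfolding X_def U_def W_def Sprev
    by (cases "prev t") (simp add: cl_step_def \<delta> Let_def)
  have "closed_loop_S1 F Px Pu \<delta> (X, U, W)"
    unfolding closed_loop_S1_def \<delta>
  proof (simp, intro conjI allI impI)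
    show "X 0 = w 0" using eqs[of 0] by simp
  next
    fix t :: nat assume "0 < t"
    have "F (fst (prev t), fst (snd (prev t))) t = F (X, U) t"
      using sc pagree[of _ t] unfolding strictly_causal2_def by blast
    then show "X t = F (X, U) t + w t" using eqs[of t] \<open>0 < t\<close> by simp
  next
    fix t
    have "Px ((snd (snd (prev t)))(t := 0)) t = Px (W(t := 0)) t"
      by (rule causalD[OF cx], rule upd_agree) (use pagree[of _ t] in auto)
    then show "W t = X t + v t - Px (W(t := 0)) t" using eqs[of t] by simp
  next
    fix t
    have "Px ((snd (snd (prev t)))(t := 0)) t = Px (W(t := 0)) t"
      by (rule causalD[OF cx], rule upd_agree) (use pagree[of _ t] in auto)
    then have wt: "W t = X t + v t - Px ((snd (snd (prev t)))(t := 0)) t" using eqs[of t] by simp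
    have "Pu ((snd (snd (prev t)))(t := X t + v t - Px ((snd (snd (prev t)))(t := 0)) t)) t = Pu W t"
    proof (rule causalD[OF cu])
      fix s assume "s \<le> t"
      then show "((snd (snd (prev t)))(t := X t + v t - Px ((snd (snd (prev t)))(t := 0)) t)) s = W s"
        using pagree[of s t] wt by (cases "s = t") auto
    qed
    then show "U t = Pu W t + d t" using eqs[of t] by simp
  qed
  then show ?thesis by blast
qed

lemma Phi_S1_spec:
  assumes "strictly_causal2 F" "causal Px" "causal Pu"
  shows "closed_loop_S1 F Px Pu \<delta> (Phi_S1 F Px Pu \<delta>)"
  unfolding Phi_S1_def
  using closed_loop_exists[OF assms] closed_loop_unique[OF assms]
  by (metis theI)



lemma trunc_add: "trunc T (a + b :: nat \<Rightarrow> 'a::ab_group_add) = trunc T a + trunc T b"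
  by (auto simp: trunc_def fun_eq_iff)
lemma trunc_diff: "trunc T (a - b :: nat \<Rightarrow> 'a::ab_group_add) = trunc T a - trunc T b"
  by (auto simp: trunc_def fun_eq_iff)
lemma trunc_uminus: "trunc T (- a :: nat \<Rightarrow> 'a::ab_group_add) = - trunc T a"
  by (auto simp: trunc_def fun_eq_iff)

lemma trunc_causal:
  assumes "causal A"
  shows "trunc T (A x) = trunc T (A (trunc T x))"
proof
  fix t
  show "trunc T (A x) t = trunc T (A (trunc T x)) t"
  proof (cases "t \<le> T")
    case True
    have "A x t = A (trunc T x) t"
      by (rule causalD[OF assms]) (use True in \<open>auto simp: trunc_def\<close>)
    then show ?thesis by (simp add: trunc_def)
  qed (simp add: trunc_def)
qed

lemma trunc_sc2:
  assumes "strictly_causal2 F"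
  shows "trunc T (F (x, u)) = trunc T (F (trunc T x, trunc T u))"
proof
  fix t
  show "trunc T (F (x, u)) t = trunc T (F (trunc T x, trunc T u)) t"
  proof (cases "t \<le> T")
    case True
    have "\<forall>s<t. x s = trunc T x s \<and> u s = trunc T u s" using True by (auto simp: trunc_def)
    then have "F (x, u) t = F (trunc T x, trunc T u) t"
      using assms unfolding strictly_causal2_def by blast
    then show ?thesis by (simp add: trunc_def)
  qed (simp add: trunc_def)
qed

lemma Delta_causal:
  assumes "strictly_causal2 F" "causal Px" "causal Pu"
  shows "causal (\<lambda>w. F (Px w, Pu w) + w - Px w)"
  unfolding causal_def
proof (intro allI impI)
  fix x y :: "nat \<Rightarrow> 'a" and t
  assume h: "\<forall>s\<le>t. x s = y s"
  have "\<forall>s<t. Px x s = Px y s \<and> Pu x s = Pu y s"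
  proof (intro allI impI conjI)
    fix s assume "s < t"
    then have "\<And>r. r \<le> s \<Longrightarrow> x r = y r" using h by auto
    then show "Px x s = Px y s" "Pu x s = Pu y s"
      using causalD[OF assms(2)] causalD[OF assms(3)] by blast+
  qed
  then have "F (Px x, Pu x) t = F (Px y, Pu y) t"
    using assms(1) unfolding strictly_causal2_def by blast
  moreover have "Px x t = Px y t" using h causalD[OF assms(2)] by blast
  ultimately show "(F (Px x, Pu x) + x - Px x) t = (F (Px y, Pu y) + y - Px y) t"
    using h by simp
qed

lemma causal_trunc_bound:
  assumes N: "is_norm N" "1 \<le> p" and M: "is_norm M" and c: "causal A"
    and ifg: "ifg_stable_with (lp_norm N p) (lp_norm M p) A g b"
  shows "lp_norm M p (trunc T (A x - A y)) \<le> ereal g * lp_norm N p (trunc T x - trunc T y) + ereal b"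
proof -
  have "trunc T (A x - A y) = trunc T (A (trunc T x) - A (trunc T y))"
    using trunc_causal[OF c, of T x] trunc_causal[OF c, of T y] by (simp add: trunc_diff)
  then have "lp_norm M p (trunc T (A x - A y)) \<le> lp_norm M p (A (trunc T x) - A (trunc T y))"
    using lp_trunc_le[OF M N(2)] by metis
  also have "\<dots> \<le> ereal g * lp_norm N p (trunc T x - trunc T y) + ereal b"
    using ifg lp_trunc_fin[OF N] unfolding ifg_stable_with_def by blast
  finally show ?thesis .
qed

lemma pair_ifg:
  assumes "ifg_stable_with NA (pair_norm L1 L2) (\<lambda>w. (A w, B w)) g b"
    "\<And>a. 0 \<le> L1 a" "\<And>a. 0 \<le> L2 a"
  shows "ifg_stable_with NA L1 A g b" "ifg_stable_with NA L2 B g b"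
proof -
  have "L1 (A a - A a') \<le> ereal g * NA (a - a') + ereal b \<and> L2 (B a - B a') \<le> ereal g * NA (a - a') + ereal b"
    if "NA a < \<infinity>" "NA a' < \<infinity>" for a a'
  proof -
    have h: "L1 (A a - A a') + L2 (B a - B a') \<le> ereal g * NA (a - a') + ereal b"
      using assms(1) that unfolding ifg_stable_with_def pair_norm_def by auto
    have "L1 (A a - A a') \<le> L1 (A a - A a') + L2 (B a - B a')"
      using assms(3) by (simp add: add_increasing2)
    moreover have "L2 (B a - B a') \<le> L1 (A a - A a') + L2 (B a - B a')"
      using assms(2) by (simp add: add_increasing)
    ultimately show ?thesis using h by (meson order_trans)
  qed
  then show "ifg_stable_with NA L1 A g b" "ifg_stable_with NA L2 B g b"
    using assms(1) unfolding ifg_stable_with_def by auto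
qed

lemma F_trunc:
  assumes nx: "is_norm nx" and nu: "is_norm nu" and p: "1 \<le> p" and sc: "strictly_causal2 F"
    and ifg: "ifg_stable_with (pair_norm (lp_norm nx p) (lp_norm nu p)) (lp_norm nx p) F g b"
  shows "lp_norm nx p (trunc T (F (x, u) - F (x + v, u - d)))
     \<le> ereal g * (lp_norm nx p v + lp_norm nu p d) + ereal b"
proof -
  let ?t = "trunc T"
  have "?t (F (x, u) - F (x + v, u - d)) = ?t (F (?t x, ?t u) - F (?t x + ?t v, ?t u - ?t d))"
    using trunc_sc2[OF sc, of T x u] trunc_sc2[OF sc, of T "x + v" "u - d"]
    by (simp add: trunc_diff trunc_add)
  then have "lp_norm nx p (?t (F (x, u) - F (x + v, u - d)))
      \<le> lp_norm nx p (F (?t x, ?t u) - F (?t x + ?t v, ?t u - ?t d))"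
    using lp_trunc_le[OF nx p] by metis
  also have "\<dots> \<le> ereal g * pair_norm (lp_norm nx p) (lp_norm nu p) ((?t x, ?t u) - (?t x + ?t v, ?t u - ?t d)) + ereal b"
  proof -
    have f1: "pair_norm (lp_norm nx p) (lp_norm nu p) (?t x, ?t u) < \<infinity>"
      using lp_trunc_fin[OF nx p] lp_trunc_fin[OF nu p] unfolding pair_norm_def by simp
    have f2: "pair_norm (lp_norm nx p) (lp_norm nu p) (?t x + ?t v, ?t u - ?t d) < \<infinity>"
      using lp_trunc_fin[OF nx p, of T "x + v"] lp_trunc_fin[OF nu p, of T "u - d"]
      unfolding pair_norm_def by (simp add: trunc_add trunc_diff)
    show ?thesis using ifg f1 f2 unfolding ifg_stable_with_def by blast
  qed
  also have "pair_norm (lp_norm nx p) (lp_norm nu p) ((?t x, ?t u) - (?t x + ?t v, ?t u - ?t d))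
     = lp_norm nx p (?t v) + lp_norm nu p (?t d)"
    unfolding pair_norm_def using lp_uminus[OF nx p, of "?t v"] by simp
  finally have h: "lp_norm nx p (?t (F (x, u) - F (x + v, u - d))) \<le> ereal g * (lp_norm nx p (?t v) + lp_norm nu p (?t d)) + ereal b" .
  have "ereal g * (lp_norm nx p (?t v) + lp_norm nu p (?t d)) \<le> ereal g * (lp_norm nx p v + lp_norm nu p d)"
    using ifg unfolding ifg_stable_with_def
    by (intro ereal_mult_left_mono add_mono lp_trunc_le nx nu p) auto
  then show ?thesis using h by (meson add_right_mono order_trans)
qed



lemma loop_facts:
  fixes F :: "(nat \<Rightarrow> 'x::ab_group_add) \<times> (nat \<Rightarrow> 'u::ab_group_add) \<Rightarrow> (nat \<Rightarrow> 'x)"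
  assumes F0: "\<forall>x u. F (x, u) 0 = 0" and scD: "strictly_causal (\<lambda>w. Px w - w)"
    and cl: "closed_loop_S1 F Px Pu (w, d, v) (x, u, wh)"
  shows "Px wh = x + v" "Pu wh = u - d" "x = F (x, u) + w"
    "wh = (F (Px wh, Pu wh) + wh - Px wh) + (F (x, u) - F (x + v, u - d) + w + v)"
proof -
  note H = cl[unfolded closed_loop_S1_def, simplified]
  have px: "Px wh t = x t + v t" for t
  proof -
    have "\<forall>s<t. wh s = (wh(t := 0)) s" by auto
    then have "(Px wh - wh) t = (Px (wh(t := 0)) - wh(t := 0)) t"
      using scD unfolding strictly_causal_def by blast
    then have "Px wh t - wh t = Px (wh(t := 0)) t" by simp
    moreover have "wh t = x t + v t - Px (wh(t := 0)) t" using H by blast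
    moreover have "Px wh t = (Px wh t - wh t) + wh t" by simp
    ultimately show ?thesis by simp
  qed
  show a: "Px wh = x + v" using px by (auto simp: fun_eq_iff)
  show b: "Pu wh = u - d" using H by (auto simp: fun_eq_iff algebra_simps)
  have xt: "x t = F (x, u) t + w t" for t
    using H F0 by (cases "t = 0") auto
  then show c: "x = F (x, u) + w" by (auto simp: fun_eq_iff)
  show "wh = (F (Px wh, Pu wh) + wh - Px wh) + (F (x, u) - F (x + v, u - d) + w + v)"
    unfolding a b
  proof (rule ext)
    fix t
    show "wh t = (F (x + v, u - d) + wh - (x + v) + (F (x, u) - F (x + v, u - d) + w + v)) t"
      using xt[of t] by (simp add: algebra_simps)
  qed
qed

lemma lp_fin_real:
  assumes "is_norm N" "1 \<le> p" "lp_norm N p a < \<infinity>"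
  obtains r where "0 \<le> r" "lp_norm N p a = ereal r"
  using lp_nonneg[OF assms(1,2), of a] assms(3) by (cases "lp_norm N p a") auto

lemma R_bound:
  assumes nx: "is_norm nx" and nu: "is_norm nu" and p: "1 \<le> p" and sc: "strictly_causal2 F"
    and ifg: "ifg_stable_with (pair_norm (lp_norm nx p) (lp_norm nu p)) (lp_norm nx p) F g b"
    and rv: "lp_norm nx p v = ereal rv" and rd: "lp_norm nu p d = ereal rd" and rw: "lp_norm nx p w = ereal rw"
  shows "lp_norm nx p (trunc T (F (x, u) - F (x + v, u - d) + w + v)) \<le> ereal (g * (rv + rd) + b + rw + rv)"
proof -
  let ?A = "F (x, u) - F (x + v, u - d)"
  have "lp_norm nx p (trunc T (?A + w + v)) = lp_norm nx p (trunc T ?A + trunc T w + trunc T v)"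
    by (simp add: trunc_add)
  also have "\<dots> \<le> lp_norm nx p (trunc T ?A + trunc T w) + lp_norm nx p (trunc T v)"
    by (rule lp_triangle[OF nx p])
  also have "\<dots> \<le> (lp_norm nx p (trunc T ?A) + lp_norm nx p (trunc T w)) + lp_norm nx p (trunc T v)"
    by (intro add_right_mono lp_triangle[OF nx p])
  also have "\<dots> \<le> (ereal g * (lp_norm nx p v + lp_norm nu p d) + ereal b + lp_norm nx p w) + lp_norm nx p v"
    by (intro add_mono F_trunc[OF nx nu p sc ifg] lp_trunc_le[OF nx p] order_refl)
  also have "\<dots> = ereal (g * (rv + rd) + b + rw + rv)" using rv rd rw by simp
  finally show ?thesis .
qed



lemma ereal_sum_fin:
  fixes a b :: ereal
  assumes "0 \<le> a" "0 \<le> b" "a + b < \<infinity>"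
  shows "a < \<infinity>" "b < \<infinity>"
  using assms by (cases a; cases b; auto)+

lemma lp_diff_fin:
  assumes "is_norm N" "1 \<le> p" "lp_norm N p a < \<infinity>" "lp_norm N p b < \<infinity>"
  shows "lp_norm N p (a - b) < \<infinity>"
proof -
  have "lp_norm N p (a - b) \<le> lp_norm N p a + lp_norm N p (- b)"
    using lp_triangle[OF assms(1,2), of a "- b"] by simp
  also have "\<dots> = lp_norm N p a + lp_norm N p b" using lp_uminus[OF assms(1,2)] by simp
  also have "\<dots> < \<infinity>"
  proof -
    obtain ra where "lp_norm N p a = ereal ra" using lp_fin_real[OF assms(1,2,3)] by blast
    moreover obtain rb where "lp_norm N p b = ereal rb" using lp_fin_real[OF assms(1,2,4)] by blast
    ultimately show ?thesis by simp
  qed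
  finally show ?thesis .
qed

lemma lp_le_diff:
  assumes "is_norm N" "1 \<le> p" "lp_norm N p (a - b) = ereal r" "lp_norm N p b = ereal s"
    "lp_norm N p a = ereal t"
  shows "t \<le> r + s"
proof -
  have "lp_norm N p a \<le> lp_norm N p (a - b) + lp_norm N p b"
    using lp_triangle[OF assms(1,2), of "a - b" b] by simp
  then show ?thesis using assms(3-5) by simp
qed

theorem theorem2:
  fixes nx :: "real^'n \<Rightarrow> real" and nu :: "real^'m \<Rightarrow> real" and p :: ereal
    and F :: "(nat \<Rightarrow> real^'n) \<times> (nat \<Rightarrow> real^'m) \<Rightarrow> (nat \<Rightarrow> real^'n)"
    and Psix :: "(nat \<Rightarrow> real^'n) \<Rightarrow> (nat \<Rightarrow> real^'n)"
    and Psiu :: "(nat \<Rightarrow> real^'n) \<Rightarrow> (nat \<Rightarrow> real^'m)"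
    and \<gamma> \<beta> :: real
    and \<delta>s :: "(nat \<Rightarrow> real^'n) \<times> (nat \<Rightarrow> real^'m) \<times> (nat \<Rightarrow> real^'n)"
  assumes "is_norm nx" and "is_norm nu" and "1 \<le> p"
    and "strictly_causal2 F" and "\<forall>x u. F (x, u) 0 = 0"
    and "causal Psix" and "causal Psiu" and "strictly_causal (\<lambda>w. Psix w - w)"
    and "ifg_stable (lp_norm nx p) (pair_norm (lp_norm nx p) (lp_norm nu p)) (\<lambda>w. (Psix w, Psiu w))"
    and "ifg_stable (pair_norm (lp_norm nx p) (lp_norm nu p)) (lp_norm nx p) F"
    and "ifg_stable_with (lp_norm nx p) (lp_norm nx p) (\<lambda>w. F (Psix w, Psiu w) + w - Psix w) \<gamma> \<beta>"
    and "\<gamma> < 1"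
    and "pair_norm (lp_norm nx p) (pair_norm (lp_norm nu p) (lp_norm nx p)) \<delta>s < \<infinity>"
  shows "fg_stable_at (pair_norm (lp_norm nx p) (pair_norm (lp_norm nu p) (lp_norm nx p)))
           (pair_norm (lp_norm nx p) (pair_norm (lp_norm nu p) (lp_norm nx p)))
           (Phi_S1 F Psix Psiu) \<delta>s"
proof -
  let ?Lx = "lp_norm nx p" and ?Lu = "lp_norm nu p"
  let ?D = "\<lambda>w. F (Psix w, Psiu w) + w - Psix w"
  note nx = assms(1) and nu = assms(2) and p = assms(3) and sc = assms(4) and F0 = assms(5)
    and cx = assms(6) and cu = assms(7) and scD = assms(8) and ifgD = assms(11)
  obtain gP bP where ifgP: "ifg_stable_with ?Lx (pair_norm ?Lx ?Lu) (\<lambda>w. (Psix w, Psiu w)) gP bP"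
    using assms(9) unfolding ifg_stable_def by blast
  obtain gF bF where ifgF: "ifg_stable_with (pair_norm ?Lx ?Lu) ?Lx F gF bF"
    using assms(10) unfolding ifg_stable_def by blast
  have ifgPx: "ifg_stable_with ?Lx ?Lx Psix gP bP" and ifgPu: "ifg_stable_with ?Lx ?Lu Psiu gP bP"
    using pair_ifg[OF ifgP] lp_nonneg[OF nx p] lp_nonneg[OF nu p] by auto
  have pos: "0 \<le> gP" "0 \<le> bP" "0 \<le> gF" "0 \<le> bF" "0 \<le> \<gamma>" "0 \<le> \<beta>"
    using ifgP ifgF ifgD unfolding ifg_stable_with_def by auto
  have Dc: "causal ?D" by (rule Delta_causal[OF sc cx cu])
  obtain ws ds vs where dss: "\<delta>s = (ws, ds, vs)" by (cases \<delta>s) auto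
  have fs0: "?Lx ws + (?Lu ds + ?Lx vs) < \<infinity>" using assms(13) dss unfolding pair_norm_def by simp
  have fs: "?Lx ws < \<infinity>" "?Lu ds < \<infinity>" "?Lx vs < \<infinity>"
    using ereal_sum_fin[OF _ _ fs0] ereal_sum_fin[of "?Lu ds" "?Lx vs"] lp_nonneg[OF nx p] lp_nonneg[OF nu p]
    by (auto simp: add_nonneg_nonneg)
  obtain rws where rws: "0 \<le> rws" "?Lx ws = ereal rws" using lp_fin_real[OF nx p fs(1)] by blast
  obtain rds where rds: "0 \<le> rds" "?Lu ds = ereal rds" using lp_fin_real[OF nu p fs(2)] by blast
  obtain rvs where rvs: "0 \<le> rvs" "?Lx vs = ereal rvs" using lp_fin_real[OF nx p fs(3)] by blast
  define Ms where "Ms = rws + rds + rvs"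
  obtain xs us whs where ys: "Phi_S1 F Psix Psiu \<delta>s = (xs, us, whs)" by (cases "Phi_S1 F Psix Psiu \<delta>s") auto
  have cls: "closed_loop_S1 F Psix Psiu (ws, ds, vs) (xs, us, whs)"
    using Phi_S1_spec[OF sc cx cu, of \<delta>s] ys dss by simp
  note LFs = loop_facts[OF F0 scD cls]
  define K1 where "K1 = 2 * (gF + 1)"
  define K0 where "K0 = \<beta> + 4 * (gF + 1) * Ms + 2 * bF"
  define c where "c = 1 - \<gamma>"
  have c0: "0 < c" using assms(12) unfolding c_def by simp
  define \<gamma>' where "\<gamma>' = (2 * gP + 1) * K1 / c + 1"
  define \<beta>' where "\<beta>' = (2 * gP + 1) * K0 / c + 2 * bP"
  have K: "0 \<le> K1" "0 \<le> K0" unfolding K1_def K0_def Ms_def using pos rws rds rvs by auto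
  show ?thesis
    unfolding fg_stable_at_def
  proof (intro exI conjI allI impI)
    show "0 \<le> \<gamma>'" unfolding \<gamma>'_def using pos K c0 by auto
    show "0 \<le> \<beta>'" unfolding \<beta>'_def using pos K c0 by auto
    fix \<delta> assume fin: "pair_norm ?Lx (pair_norm ?Lu ?Lx) \<delta> < \<infinity>"
    obtain w d v where dd: "\<delta> = (w, d, v)" by (cases \<delta>) auto
    have f0: "?Lx w + (?Lu d + ?Lx v) < \<infinity>" using fin dd unfolding pair_norm_def by simp
    have f: "?Lx w < \<infinity>" "?Lu d < \<infinity>" "?Lx v < \<infinity>"
      using ereal_sum_fin[OF _ _ f0] ereal_sum_fin[of "?Lu d" "?Lx v"] lp_nonneg[OF nx p] lp_nonneg[OF nu p]
      by (auto simp: add_nonneg_nonneg)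
    obtain rw where rw: "0 \<le> rw" "?Lx w = ereal rw" using lp_fin_real[OF nx p f(1)] by blast
    obtain rd where rd: "0 \<le> rd" "?Lu d = ereal rd" using lp_fin_real[OF nu p f(2)] by blast
    obtain rv where rv: "0 \<le> rv" "?Lx v = ereal rv" using lp_fin_real[OF nx p f(3)] by blast
    obtain rdw where rdw: "0 \<le> rdw" "?Lx (w - ws) = ereal rdw"
      using lp_fin_real[OF nx p lp_diff_fin[OF nx p f(1) fs(1)]] by blast
    obtain rdd where rdd: "0 \<le> rdd" "?Lu (d - ds) = ereal rdd"
      using lp_fin_real[OF nu p lp_diff_fin[OF nu p f(2) fs(2)]] by blast
    obtain rdv where rdv: "0 \<le> rdv" "?Lx (v - vs) = ereal rdv"
      using lp_fin_real[OF nx p lp_diff_fin[OF nx p f(3) fs(3)]] by blast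
    define D where "D = rdw + rdd + rdv"
    have NAeq: "pair_norm ?Lx (pair_norm ?Lu ?Lx) (\<delta> - \<delta>s) = ereal D"
      unfolding dd dss pair_norm_def D_def using rdw rdd rdv by simp
    have le1: "rw \<le> rdw + rws" by (rule lp_le_diff[OF nx p rdw(2) rws(2) rw(2)])
    have le2: "rd \<le> rdd + rds" by (rule lp_le_diff[OF nu p rdd(2) rds(2) rd(2)])
    have le3: "rv \<le> rdv + rvs" by (rule lp_le_diff[OF nx p rdv(2) rvs(2) rv(2)])
    obtain x u wh where yy: "Phi_S1 F Psix Psiu \<delta> = (x, u, wh)" by (cases "Phi_S1 F Psix Psiu \<delta>") auto
    have cl: "closed_loop_S1 F Psix Psiu (w, d, v) (x, u, wh)"
      using Phi_S1_spec[OF sc cx cu, of \<delta>] yy dd by simp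
    note LF = loop_facts[OF F0 scD cl]
    define \<rho> where "\<rho> = gF * (rv + rd) + bF + rw + rv"
    define \<rho>s where "\<rho>s = gF * (rvs + rds) + bF + rws + rvs"
    define E where "E = (\<beta> + \<rho> + \<rho>s) / c"
    have eT: "?Lx (trunc T (wh - whs)) \<le> ereal E" for T
    proof -
      let ?R = "F (x, u) - F (x + v, u - d) + w + v"
      let ?Rs = "F (xs, us) - F (xs + vs, us - ds) + ws + vs"
      have "wh - whs = (?D wh + ?R) - (?D whs + ?Rs)"
        using LF(4) LFs(4) by (rule arg_cong2[where f = "(-)"])
      also have "\<dots> = (?D wh - ?D whs) + (?R + - ?Rs)" by (simp add: algebra_simps)
      finally have eq: "wh - whs = (?D wh - ?D whs) + (?R + - ?Rs)" .
      have "trunc T (wh - whs) = trunc T ((?D wh - ?D whs) + (?R + - ?Rs))" by (simp only: eq)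
      also have "\<dots> = trunc T (?D wh - ?D whs) + (trunc T ?R + - trunc T ?Rs)"
        by (simp only: trunc_add[of T "?D wh - ?D whs"] trunc_add[of T ?R "- ?Rs"] trunc_uminus)
      finally have "trunc T (wh - whs) = trunc T (?D wh - ?D whs) + (trunc T ?R + - trunc T ?Rs)" .
      then have "?Lx (trunc T (wh - whs)) = ?Lx (trunc T (?D wh - ?D whs) + (trunc T ?R + - trunc T ?Rs))"
        by simp
      also have "\<dots> \<le> ?Lx (trunc T (?D wh - ?D whs)) + ?Lx (trunc T ?R + - trunc T ?Rs)"
        by (rule lp_triangle[OF nx p])
      also have "\<dots> \<le> ?Lx (trunc T (?D wh - ?D whs)) + (?Lx (trunc T ?R) + ?Lx (- trunc T ?Rs))"
        by (intro add_left_mono lp_triangle[OF nx p])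
      also have "\<dots> = ?Lx (trunc T (?D wh - ?D whs)) + (?Lx (trunc T ?R) + ?Lx (trunc T ?Rs))"
        by (simp only: lp_uminus[OF nx p])
      also have "\<dots> \<le> (ereal \<gamma> * ?Lx (trunc T wh - trunc T whs) + ereal \<beta>) + (ereal \<rho> + ereal \<rho>s)"
        unfolding \<rho>_def \<rho>s_def
        by (intro add_mono causal_trunc_bound[OF nx p nx Dc ifgD]
            R_bound[OF nx nu p sc ifgF rv(2) rd(2) rw(2)] R_bound[OF nx nu p sc ifgF rvs(2) rds(2) rws(2)])
      finally have h: "?Lx (trunc T (wh - whs)) \<le> (ereal \<gamma> * ?Lx (trunc T wh - trunc T whs) + ereal \<beta>) + (ereal \<rho> + ereal \<rho>s)" .
      obtain r where r: "?Lx (trunc T (wh - whs)) = ereal r"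
        using lp_fin_real[OF nx p lp_trunc_fin[OF nx p]] by blast
      have "trunc T wh - trunc T whs = trunc T (wh - whs)" by (simp add: trunc_diff)
      then have "r \<le> \<gamma> * r + \<beta> + (\<rho> + \<rho>s)" using h r by simp
      then have "r * c \<le> \<beta> + \<rho> + \<rho>s" unfolding c_def by (simp add: algebra_simps)
      then have "r \<le> E" unfolding E_def using c0 by (simp add: pos_le_divide_eq)
      then show ?thesis using r by simp
    qed
    have ewh: "?Lx (wh - whs) \<le> ereal E" by (rule lp_sup[OF nx p eT])
    have ePx: "?Lx (Psix wh - Psix whs) \<le> ereal (gP * E + bP)"
    proof (rule lp_sup[OF nx p])
      fix T
      have "?Lx (trunc T (Psix wh - Psix whs)) \<le> ereal gP * ?Lx (trunc T wh - trunc T whs) + ereal bP"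
        by (rule causal_trunc_bound[OF nx p nx cx ifgPx])
      also have "\<dots> \<le> ereal gP * ereal E + ereal bP"
        using eT[of T] pos by (intro add_right_mono ereal_mult_left_mono) (auto simp: trunc_diff)
      finally show "?Lx (trunc T (Psix wh - Psix whs)) \<le> ereal (gP * E + bP)" by simp
    qed
    have ePu: "?Lu (Psiu wh - Psiu whs) \<le> ereal (gP * E + bP)"
    proof (rule lp_sup[OF nu p])
      fix T
      have "?Lu (trunc T (Psiu wh - Psiu whs)) \<le> ereal gP * ?Lx (trunc T wh - trunc T whs) + ereal bP"
        by (rule causal_trunc_bound[OF nx p nu cu ifgPu])
      also have "\<dots> \<le> ereal gP * ereal E + ereal bP"
        using eT[of T] pos by (intro add_right_mono ereal_mult_left_mono) (auto simp: trunc_diff)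
      finally show "?Lu (trunc T (Psiu wh - Psiu whs)) \<le> ereal (gP * E + bP)" by simp
    qed
    have "x - xs = (Psix wh - Psix whs) + - (v - vs)" using LF(1) LFs(1) by (simp add: algebra_simps)
    then have "?Lx (x - xs) \<le> ?Lx (Psix wh - Psix whs) + ?Lx (- (v - vs))"
      using lp_triangle[OF nx p, of "Psix wh - Psix whs" "- (v - vs)"] by simp
    also have "\<dots> = ?Lx (Psix wh - Psix whs) + ?Lx (v - vs)" by (simp only: lp_uminus[OF nx p])
    also have "\<dots> \<le> ereal (gP * E + bP) + ereal rdv" using ePx rdv by (intro add_mono) auto
    finally have ex: "?Lx (x - xs) \<le> ereal (gP * E + bP + rdv)" by simp
    have "u - us = (Psiu wh - Psiu whs) + (d - ds)" using LF(2) LFs(2) by (simp add: algebra_simps)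
    then have "?Lu (u - us) \<le> ?Lu (Psiu wh - Psiu whs) + ?Lu (d - ds)"
      using lp_triangle[OF nu p, of "Psiu wh - Psiu whs" "d - ds"] by simp
    also have "\<dots> \<le> ereal (gP * E + bP) + ereal rdd" using ePu rdd by (intro add_mono) auto
    finally have eu: "?Lu (u - us) \<le> ereal (gP * E + bP + rdd)" by simp
    have tot: "pair_norm ?Lx (pair_norm ?Lu ?Lx) (Phi_S1 F Psix Psiu \<delta> - Phi_S1 F Psix Psiu \<delta>s)
        \<le> ereal (gP * E + bP + rdv) + (ereal (gP * E + bP + rdd) + ereal E)"
      unfolding yy ys pair_norm_def using ex eu ewh by (simp del: plus_ereal.simps add: add_mono)
    have rho: "\<rho> + \<rho>s \<le> K1 * D + (4 * (gF + 1) * Ms + 2 * bF)"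
    proof -
      have b1: "rv \<le> D + Ms" "rd \<le> D + Ms" "rw \<le> D + Ms"
        using le1 le2 le3 rdw(1) rdd(1) rdv(1) rws(1) rds(1) rvs(1) D_def Ms_def by linarith+
      have b2: "rvs \<le> Ms" "rds \<le> Ms" "rws \<le> Ms" using rws(1) rds(1) rvs(1) Ms_def by linarith+
      have a1: "rv + rd \<le> 2 * (D + Ms)" using add_mono[OF b1(1,2)] by (simp only: mult_2)
      have a1': "rw + rv \<le> 2 * (D + Ms)" using add_mono[OF b1(3,1)] by (simp only: mult_2)
      have a2: "rvs + rds \<le> 2 * Ms" using add_mono[OF b2(1,2)] by (simp only: mult_2)
      have a2': "rws + rvs \<le> 2 * Ms" using add_mono[OF b2(3,1)] by (simp only: mult_2)
      have "gF * (rv + rd) \<le> gF * (2 * (D + Ms))" using a1 pos by (intro mult_left_mono) auto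
      moreover have "gF * (rvs + rds) \<le> gF * (2 * Ms)" using a2 pos by (intro mult_left_mono) auto
      ultimately show ?thesis unfolding \<rho>_def \<rho>s_def K1_def using a1 a1' a2 a2'
        by (simp add: algebra_simps)
    qed
    have EE: "E \<le> (K1 * D + K0) / c"
      unfolding E_def K0_def using rho c0 by (intro divide_right_mono) simp_all
    have "(2 * gP + 1) * E \<le> (2 * gP + 1) * ((K1 * D + K0) / c)"
      using EE pos(1) by (intro mult_left_mono) simp_all
    also have "\<dots> = ((2 * gP + 1) * K1 / c) * D + (2 * gP + 1) * K0 / c"
      using c0 by (simp add: field_simps)
    finally have fin1: "(2 * gP + 1) * E \<le> ((2 * gP + 1) * K1 / c) * D + (2 * gP + 1) * K0 / c" .
    have "(gP * E + bP + rdv) + ((gP * E + bP + rdd) + E) \<le> \<gamma>' * D + \<beta>'"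
      using fin1 rdw unfolding \<gamma>'_def \<beta>'_def D_def by (simp add: algebra_simps)
    then have "ereal (gP * E + bP + rdv) + (ereal (gP * E + bP + rdd) + ereal E) \<le> ereal \<gamma>' * ereal D + ereal \<beta>'"
      by simp
    then show "pair_norm ?Lx (pair_norm ?Lu ?Lx) (Phi_S1 F Psix Psiu \<delta> - Phi_S1 F Psix Psiu \<delta>s)
        \<le> ereal \<gamma>' * pair_norm ?Lx (pair_norm ?Lu ?Lx) (\<delta> - \<delta>s) + ereal \<beta>'"
      unfolding NAeq by (rule order_trans[OF tot])
  qed
qed

end
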